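(* Let $\mathbb{F}_q$ be a finite field, $\mathbb{P}$ a poset on $[n]=\{1,\dots,n\}$, and let $\mathcal{C}\subseteq\mathbb{F}_q^n$ be a linear MDS $\mathbb{P}$-code with parameters $[n,k,d=n-k+1]$, i.e. a linear $[n,k]$ code with $d=d_1^{\mathbb{P}}(\mathcal{C})=n-k+1$. Then, for every $r$ with $d\le r\le n$, $$\mathcal{A}_{r,\mathbb{P}}(\mathcal{C})=\sum_{I\in\Lambda^r(\mathbb{P})}\ \sum_{s=0}^{r-d}(-1)^s\binom{|M(I)|}{s}\left(q^{r-d+1-s}-1\right).$$
   Context: A subset $I\subseteq[n]$ is an ideal of $\mathbb{P}$ if $j\in I$ and $i\le_{\mathbb{P}}j$ imply $i\in I$. $\Lambda^r(\mathbb{P})$ is the set of ideals of $\mathbb{P}$ of size $r$, and $M(I)$ is the set of maximal elements (with respect to $\le_{\mathbb{P}}$) of $I$. For $u\in\mathbb{F}_q^n$, $\mathrm{supp}(u)=\{i:u_i\ne0\}$ and the $\mathbb{P}$-weight is $w_{\mathbb{P}}(u)=|\{i:i\le_{\mathbb{P}}j\text{ for some }j\in\mathrm{supp}(u)\}|$; for a subspace $D$, $w_{\mathbb{P}}(D)$ is the size of the smallest ideal containing $\bigcup_{u\in D}\mathrm{supp}(u)$. $d_1^{\mathbb{P}}(\mathcal{C})=\min\{w_{\mathbb{P}}(D): D \text{ a 1-dimensional subspace of }\mathcal{C}\}$ (the minimum $\mathbb{P}$-weight of a nonzero codeword). $\mathcal{A}_{r,\mathbb{P}}(\mathcal{C})=|\{u\in\mathcal{C}:w_{\mathbb{P}}(u)=r\}|$.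 *)

theory Defs
  imports "HOL-Analysis.Analysis"
begin

text \<open>A poset on the index set (the finite type 'n, with CARD('n) = n) is a
  relation P (pairs (i,j) meaning i \<le>_P j) with partial_order_on UNIV P.\<close>

definition is_ideal :: "('n \<times> 'n) set \<Rightarrow> 'n set \<Rightarrow> bool" where
  "is_ideal P I \<longleftrightarrow> (\<forall>j\<in>I. \<forall>i. (i, j) \<in> P \<longrightarrow> i \<in> I)"

definition ideals_of_size :: "('n \<times> 'n) set \<Rightarrow> nat \<Rightarrow> 'n set set" where
  "ideals_of_size P r = {I. is_ideal P I \<and> card I = r}"

definition maximal_elems :: "('n \<times> 'n) set \<Rightarrow> 'n set \<Rightarrow> 'n set" where
  "maximal_elems P I = {j \<in> I. \<forall>i\<in>I. (j, i) \<in> P \<longrightarrow> i = j}"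

definition supp :: "'a::zero ^ 'n \<Rightarrow> 'n set" where
  "supp u = {i. u $ i \<noteq> 0}"

definition ideal_hull :: "('n \<times> 'n) set \<Rightarrow> 'n set \<Rightarrow> 'n set" where
  "ideal_hull P A = {i. \<exists>j\<in>A. (i, j) \<in> P}"

definition pweight :: "('n \<times> 'n) set \<Rightarrow> 'a::zero ^ 'n \<Rightarrow> nat" where
  "pweight P u = card (ideal_hull P (supp u))"

definition min_pweight :: "('n \<times> 'n) set \<Rightarrow> ('a::zero ^ 'n) set \<Rightarrow> nat" where
  "min_pweight P C = Min {pweight P u | u. u \<in> C \<and> u \<noteq> 0}"

definition weight_count :: "nat \<Rightarrow> ('n \<times> 'n) set \<Rightarrow> ('a::zero ^ 'n) set \<Rightarrow> nat" where
  "weight_count r P C = card {u \<in> C. pweight P u = r}"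

end

theory Submission
  imports Defs
begin

lemma card_subspace:
  fixes C :: "('a::{finite,field} ^ 'n::finite) set"
  assumes "vec.subspace C"
  shows "card C = CARD('a) ^ vec.dim C"
proof -
  obtain B where B: "B \<subseteq> C" "vec.independent B" "C \<subseteq> vec.span B" "card B = vec.dim C"
    using vec.basis_exists by blast
  have fB: "finite B" by simp
  have CB: "vec.span B = C" using vec.span_subspace[OF B(1) B(3) assms] .
  let ?phi = "\<lambda>f. \<Sum>v\<in>B. f v *s v"
  have bij: "bij_betw ?phi (B \<rightarrow>\<^sub>E (UNIV::'a set)) C"
  proof (rule bij_betwI')
    fix f g :: "'a^'n \<Rightarrow> 'a" assume f: "f \<in> B \<rightarrow>\<^sub>E UNIV" and g: "g \<in> B \<rightarrow>\<^sub>E UNIV"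
    show "(?phi f = ?phi g) = (f = g)"
    proof
      assume eq: "?phi f = ?phi g"
      have "(\<Sum>v\<in>B. (f v - g v) *s v) = ?phi f - ?phi g"
        by (simp only: vec.scale_left_diff_distrib sum_subtractf)
      also have "\<dots> = 0" using eq by simp
      finally have z: "(\<Sum>v\<in>B. (f v - g v) *s v) = 0" .
      have "\<forall>v\<in>B. f v - g v = 0"
      proof (rule ccontr)
        assume "\<not> (\<forall>v\<in>B. f v - g v = 0)"
        then obtain v where v: "v \<in> B" "f v - g v \<noteq> 0" by blast
        have "\<exists>u. (\<exists>v\<in>B. u v \<noteq> 0) \<and> (\<Sum>v\<in>B. u v *s v) = 0"
          using v z by (intro exI[of _ "\<lambda>v. f v - g v"]) blast
        hence "vec.dependent B" by (rule iffD2[OF vec.dependent_finite[OF fB]])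
        thus False using B(2) by simp
      qed
      thus "f = g" by (intro PiE_ext[OF f g]) simp
    qed simp
  next
    fix f :: "'a^'n \<Rightarrow> 'a" assume "f \<in> B \<rightarrow>\<^sub>E UNIV"
    have "?phi f \<in> range (\<lambda>u. \<Sum>v\<in>B. u v *s v)" by (rule rangeI)
    thus "?phi f \<in> C" unfolding vec.span_finite[OF fB, symmetric] CB .
  next
    fix y assume "y \<in> C"
    hence "y \<in> range (\<lambda>u. \<Sum>v\<in>B. u v *s v)" using CB vec.span_finite[OF fB] by simp
    then obtain u where u: "y = ?phi u" by blast
    have "?phi u = ?phi (restrict u B)" by (rule sum.cong) auto
    thus "\<exists>x\<in>B \<rightarrow>\<^sub>E UNIV. y = ?phi x"
      using u by (intro bexI[of _ "restrict u B"]) auto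
  qed
  have "card C = card (B \<rightarrow>\<^sub>E (UNIV::'a set))" using bij_betw_same_card[OF bij] by simp
  also have "\<dots> = CARD('a) ^ card B" by (simp add: card_PiE)
  finally show ?thesis using B(4) by simp
qed

lemma card_supported:
  "card {v :: 'a::{finite,zero} ^ 'n::finite. supp v \<subseteq> B} = CARD('a) ^ card B"
proof -
  have bij: "bij_betw (\<lambda>v. restrict (vec_nth v) B) {v :: 'a ^ 'n. supp v \<subseteq> B} (B \<rightarrow>\<^sub>E (UNIV::'a set))"
  proof (rule bij_betwI')
    fix x y assume x: "x \<in> {v :: 'a ^ 'n. supp v \<subseteq> B}" and y: "y \<in> {v :: 'a ^ 'n. supp v \<subseteq> B}"
    show "(restrict (($) x) B = restrict (($) y) B) = (x = y)"
    proof
      assume e: "restrict (($) x) B = restrict (($) y) B"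
      show "x = y" unfolding vec_eq_iff
      proof
        fix i show "x $ i = y $ i"
        proof (cases "i \<in> B")
          case True
          have "restrict (($) x) B i = restrict (($) y) B i" using e by simp
          thus ?thesis using True by simp
        next
          case False
          have "x $ i = 0" using x False unfolding supp_def by blast
          moreover have "y $ i = 0" using y False unfolding supp_def by blast
          ultimately show ?thesis by simp
        qed
      qed
    qed simp
  next
    fix x assume "x \<in> {v :: 'a ^ 'n. supp v \<subseteq> B}"
    show "restrict (($) x) B \<in> B \<rightarrow>\<^sub>E UNIV" by simp
  next
    fix f :: "'n \<Rightarrow> 'a" assume f: "f \<in> B \<rightarrow>\<^sub>E UNIV"
    have "f = restrict (($) (\<chi> i. if i \<in> B then f i else 0)) B"
      using f by (auto simp: restrict_def fun_eq_iff PiE_iff extensional_def)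
    moreover have "(\<chi> i. if i \<in> B then f i else 0) \<in> {v. supp v \<subseteq> B}"
      by (auto simp: supp_def)
    ultimately show "\<exists>x\<in>{v. supp v \<subseteq> B}. f = restrict (($) x) B" by blast
  qed
  show ?thesis using bij_betw_same_card[OF bij] by (simp add: card_PiE)
qed

definition GG :: "int \<Rightarrow> nat \<Rightarrow> nat \<Rightarrow> int" where
  "GG q t e = (\<Sum>s\<le>t. (-1)^s * int (t choose s) * q^(e-s))"

lemma GG_0: "GG q 0 e = q^e" by (simp add: GG_def)

lemma GG_Suc: "GG q (Suc t) e = GG q t e - GG q t (e - 1)"
proof -
  let ?g = "\<lambda>s. (-1)^s * int (t choose s) * q^(e-s)"
  have A: "GG q (Suc t) e = q^e + (\<Sum>s\<le>t. (-1)^(Suc s) * int (Suc t choose Suc s) * q^(e - Suc s))"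
    unfolding GG_def by (subst sum.atMost_Suc_shift) simp
  have B: "(\<Sum>s\<le>t. (-1)^(Suc s) * int (Suc t choose Suc s) * q^(e - Suc s))
     = (\<Sum>s\<le>t. (-1)^(Suc s) * int (t choose Suc s) * q^(e - Suc s))
       - (\<Sum>s\<le>t. (-1)^s * int (t choose s) * q^((e - 1) - s))"
    unfolding sum_subtractf[symmetric]
  proof (rule sum.cong[OF refl])
    fix s assume "s \<in> {..t}"
    have "e - Suc s = (e - 1) - s" by simp
    thus "(-1)^(Suc s) * int (Suc t choose Suc s) * q^(e - Suc s)
       = (-1)^(Suc s) * int (t choose Suc s) * q^(e - Suc s) - (-1)^s * int (t choose s) * q^((e - 1) - s)"
      by (simp only: binomial_Suc_Suc of_nat_add) (simp add: algebra_simps)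
  qed
  have C: "q^e + (\<Sum>s\<le>t. (-1)^(Suc s) * int (t choose Suc s) * q^(e - Suc s)) = (\<Sum>s\<le>Suc t. ?g s)"
    by (subst sum.atMost_Suc_shift) simp
  have D: "(\<Sum>s\<le>Suc t. ?g s) = GG q t e" unfolding GG_def by simp
  show ?thesis using A B C D unfolding GG_def by linarith
qed

lemma GG_final:
  fixes q :: int
  assumes "m \<ge> 1" "e \<ge> 1"
  shows "GG q m e = (\<Sum>s=0..e-1. (-1)^s * int (m choose s) * (q^(e - s) - 1))"
proof -
  have alt: "(\<Sum>s\<le>m. (-1)^s * int (m choose s)) = (0::int)"
    using assms choose_alternating_sum[of m] by simp
  have "GG q m e = (\<Sum>s\<le>m. (-1)^s * int (m choose s) * (q^(e - s) - 1))"
    unfolding GG_def using alt by (simp add: right_diff_distrib sum_subtractf)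
  also have "\<dots> = (\<Sum>s\<in>{..m+e}. (-1)^s * int (m choose s) * (q^(e - s) - 1))"
    by (rule sum.mono_neutral_left) (auto simp: binomial_eq_0)
  also have "\<dots> = (\<Sum>s=0..e-1. (-1)^s * int (m choose s) * (q^(e - s) - 1))"
    by (rule sum.mono_neutral_right) (use assms in auto)
  finally show ?thesis .
qed
lemma po_refl: "partial_order_on UNIV P \<Longrightarrow> (i, i) \<in> P"
  using partial_order_onD(1) refl_onD by fastforce
lemma po_trans: "partial_order_on UNIV P \<Longrightarrow> (i, j) \<in> P \<Longrightarrow> (j, l) \<in> P \<Longrightarrow> (i, l) \<in> P"
  using partial_order_onD(2) transD by metis
lemma po_antisym: "partial_order_on UNIV P \<Longrightarrow> (i, j) \<in> P \<Longrightarrow> (j, i) \<in> P \<Longrightarrow> i = j"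
  using partial_order_onD(3) antisymD by metis

lemma hull_ideal: "partial_order_on UNIV P \<Longrightarrow> is_ideal P (ideal_hull P A)"
  unfolding is_ideal_def ideal_hull_def by (auto intro: po_trans)
lemma sub_hull: "partial_order_on UNIV P \<Longrightarrow> A \<subseteq> ideal_hull P A"
  unfolding ideal_hull_def by (auto intro: po_refl)
lemma hull_sub: "is_ideal P J \<Longrightarrow> A \<subseteq> J \<Longrightarrow> ideal_hull P A \<subseteq> J"
  unfolding is_ideal_def ideal_hull_def by auto

lemma exists_max_above:
  fixes P :: "('n::finite \<times> 'n) set"
  assumes po: "partial_order_on UNIV P" and i: "i \<in> I"
  shows "\<exists>m\<in>maximal_elems P I. (i, m) \<in> P"
proof -
  define S where "S = {j\<in>I. (i, j) \<in> P}"
  define f where "f j = card (ideal_hull P {j})" for j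
  have "i \<in> S" using i po_refl[OF po] by (simp add: S_def)
  hence ne: "f ` S \<noteq> {}" by auto
  obtain m where m: "m \<in> S" "f m = Max (f ` S)" using Max_in[OF _ ne] by auto
  have mx: "f x \<le> f m" if "x \<in> S" for x using m that by simp
  have "m \<in> maximal_elems P I"
    unfolding maximal_elems_def
  proof (safe)
    show "m \<in> I" using m by (simp add: S_def)
  next
    fix x assume x: "x \<in> I" "(m, x) \<in> P"
    show "x = m"
    proof (rule ccontr)
      assume ne: "x \<noteq> m"
      have xS: "x \<in> S" using x m po_trans[OF po] by (auto simp: S_def)
      have "ideal_hull P {m} \<subset> ideal_hull P {x}"
      proof
        show "ideal_hull P {m} \<subseteq> ideal_hull P {x}"
          using x(2) po_trans[OF po] by (auto simp: ideal_hull_def)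
        have "x \<in> ideal_hull P {x}" using po_refl[OF po] by (simp add: ideal_hull_def)
        moreover have "x \<notin> ideal_hull P {m}"
          using po_antisym[OF po] x(2) ne by (auto simp: ideal_hull_def)
        ultimately show "ideal_hull P {m} \<noteq> ideal_hull P {x}" by blast
      qed
      hence "f m < f x" unfolding f_def by (simp add: psubset_card_mono)
      thus False using mx[OF xS] by simp
    qed
  qed
  thus ?thesis using m by (auto simp: S_def)
qed

lemma remove_max_ideal:
  assumes po: "partial_order_on UNIV P" and J: "is_ideal P J" and m: "m \<in> maximal_elems P J"
  shows "is_ideal P (J - {m})"
  using J m po_antisym[OF po] unfolding is_ideal_def maximal_elems_def by blast

lemma max_remove:
  assumes "T \<subseteq> maximal_elems P J" "m \<notin> T"
  shows "T \<subseteq> maximal_elems P (J - {m})"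
  using assms unfolding maximal_elems_def by blast

lemma shrink_ideal:
  fixes P :: "('n::finite \<times> 'n) set"
  assumes po: "partial_order_on UNIV P"
  shows "is_ideal P J \<Longrightarrow> t \<le> card J \<Longrightarrow> \<exists>J'\<subseteq>J. is_ideal P J' \<and> card J' = t"
proof (induction "card J - t" arbitrary: J)
  case 0
  thus ?case by (intro exI[of _ J]) auto
next
  case (Suc x)
  hence "J \<noteq> {}" by auto
  then obtain i where "i \<in> J" by auto
  then obtain m where m: "m \<in> maximal_elems P J" using exists_max_above[OF po] by blast
  have mJ: "m \<in> J" using m by (simp add: maximal_elems_def)
  have id: "is_ideal P (J - {m})" using remove_max_ideal[OF po Suc.prems(1) m] .
  have c: "card (J - {m}) = card J - 1" using mJ by simp
  have "x = card (J - {m}) - t" "t \<le> card (J - {m})" using Suc.hyps(2) c by auto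
  then obtain J' where "J' \<subseteq> J - {m}" "is_ideal P J'" "card J' = t"
    using Suc.hyps(1) id by blast
  thus ?case by blast
qed

lemma hull_char:
  fixes P :: "('n::finite \<times> 'n) set"
  assumes po: "partial_order_on UNIV P" and I: "is_ideal P I"
  shows "ideal_hull P A = I \<longleftrightarrow> A \<subseteq> I \<and> maximal_elems P I \<subseteq> A"
proof
  assume h: "ideal_hull P A = I"
  have "A \<subseteq> I" using sub_hull[OF po, of A] h by simp
  moreover have "maximal_elems P I \<subseteq> A"
  proof
    fix m assume m: "m \<in> maximal_elems P I"
    then have "m \<in> ideal_hull P A" using h by (simp add: maximal_elems_def)
    then obtain j where j: "j \<in> A" "(m, j) \<in> P" by (auto simp: ideal_hull_def)
    hence "j = m" using m `A \<subseteq> I` by (auto simp: maximal_elems_def)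
    thus "m \<in> A" using j by simp
  qed
  ultimately show "A \<subseteq> I \<and> maximal_elems P I \<subseteq> A" by blast
next
  assume a: "A \<subseteq> I \<and> maximal_elems P I \<subseteq> A"
  show "ideal_hull P A = I"
  proof
    show "ideal_hull P A \<subseteq> I" using hull_sub[OF I] a by blast
    show "I \<subseteq> ideal_hull P A"
    proof
      fix i assume "i \<in> I"
      then obtain m where "m \<in> maximal_elems P I" "(i, m) \<in> P" using exists_max_above[OF po] by blast
      thus "i \<in> ideal_hull P A" using a by (auto simp: ideal_hull_def)
    qed
  qed
qed

definition zo :: "'n set \<Rightarrow> 'a::zero ^ 'n \<Rightarrow> 'a ^ 'n" where
  "zo A u = (\<chi> i. if i \<in> A then 0 else u $ i)"

lemma q2: "2 \<le> CARD('a::{finite,field})"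
proof -
  have "card {0::'a, 1} = 2" by simp
  moreover have "card {0::'a, 1} \<le> CARD('a)" by (rule card_mono) auto
  ultimately show ?thesis by simp
qed

context
  fixes P :: "('n::finite \<times> 'n) set"
    and C :: "('a::{finite,field} ^ 'n) set"
    and k d :: nat
  assumes po: "partial_order_on UNIV P"
    and sub: "vec.subspace C"
    and dimC: "vec.dim C = k"
    and dd: "d = CARD('n) - k + 1"
    and mw: "min_pweight P C = d"
begin

lemma cardC: "card C = CARD('a) ^ k"
  using card_subspace[OF sub] dimC by simp

lemma kn: "k \<le> CARD('n)"
proof -
  have "card C \<le> card {v :: 'a ^ 'n. supp v \<subseteq> UNIV}" by (rule card_mono) auto
  hence "CARD('a) ^ k \<le> CARD('a) ^ CARD('n)" using cardC card_supported[of UNIV] by simp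
  thus ?thesis using q2[where 'a='a] by (simp add: power_le_imp_le_exp)
qed

lemma pw_ge: "u \<in> C \<Longrightarrow> u \<noteq> 0 \<Longrightarrow> d \<le> pweight P u"
proof -
  assume u: "u \<in> C" "u \<noteq> 0"
  have fin: "finite {pweight P u | u. u \<in> C \<and> u \<noteq> 0}"
    by (rule finite_subset[of _ "range (pweight P)"]) auto
  have mem: "pweight P u \<in> {pweight P u | u. u \<in> C \<and> u \<noteq> 0}" using u by blast
  show ?thesis using Min_le[OF fin mem] mw unfolding min_pweight_def by simp
qed

lemma zero_in: "(0 :: 'a ^ 'n) \<in> C" using sub vec.subspace_0 by blast

lemma K_small:
  assumes J: "is_ideal P J" and cJ: "card J < d"
  shows "{u\<in>C. supp u \<subseteq> J} = {0}"
proof -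
  have "u = 0" if u: "u \<in> C" "supp u \<subseteq> J" for u
  proof (rule ccontr)
    assume "u \<noteq> 0"
    hence "d \<le> pweight P u" using pw_ge u by blast
    moreover have "pweight P u \<le> card J"
      unfolding pweight_def by (rule card_mono) (use hull_sub[OF J u(2)] in auto)
    ultimately show False using cJ by simp
  qed
  moreover have "supp (0::'a^'n) = {}" by (simp add: supp_def)
  ultimately show ?thesis using zero_in by blast
qed

lemma diff_in: "u \<in> C \<Longrightarrow> v \<in> C \<Longrightarrow> u - v \<in> C"
  using sub vec.subspace_diff by blast

lemma K_lower:
  "CARD('a) ^ k \<le> card {u\<in>C. supp u \<subseteq> J} * CARD('a) ^ (CARD('n) - card J)"
proof -
  let ?Z = "zo J :: 'a^'n \<Rightarrow> 'a^'n"
  let ?K = "{u\<in>C. supp u \<subseteq> J}"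
  have CU: "C = (\<Union>w\<in>?Z ` C. {u\<in>C. ?Z u = w})" by auto
  have fib: "card {u\<in>C. ?Z u = w} \<le> card ?K" if w: "w \<in> ?Z ` C" for w
  proof -
    obtain a0 where a0: "a0 \<in> C" "w = ?Z a0" using w by auto
    have "inj_on (\<lambda>u. u - a0) {u\<in>C. ?Z u = w}" by (rule inj_onI) simp
    moreover have "(\<lambda>u. u - a0) ` {u\<in>C. ?Z u = w} \<subseteq> ?K"
    proof (rule image_subsetI)
      fix u assume uu: "u \<in> {u\<in>C. ?Z u = w}"
      hence u: "u \<in> C" "w = ?Z u" by auto
      have "u - a0 \<in> C" using diff_in u a0 by blast
      moreover have "supp (u - a0) \<subseteq> J"
      proof
        fix i assume i: "i \<in> supp (u - a0)"
        show "i \<in> J"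
        proof (rule ccontr)
          assume "i \<notin> J"
          have "?Z u $ i = ?Z a0 $ i" using u(2) a0(2) by simp
          hence "u $ i = a0 $ i" using \<open>i \<notin> J\<close> by (simp add: zo_def)
          thus False using i by (simp add: supp_def)
        qed
      qed
      ultimately show "u - a0 \<in> ?K" by simp
    qed
    ultimately show ?thesis by (intro card_inj_on_le) auto
  qed
  have "card C \<le> (\<Sum>w\<in>?Z ` C. card {u\<in>C. ?Z u = w})"
    by (subst CU) (rule card_UN_le, simp)
  also have "\<dots> \<le> card (?Z ` C) * card ?K"
    using sum_bounded_above[of "?Z ` C" "\<lambda>w. card {u\<in>C. ?Z u = w}" "card ?K"] fib by simp
  also have "card (?Z ` C) \<le> card {v :: 'a ^ 'n. supp v \<subseteq> - J}"
    by (rule card_mono) (auto simp: zo_def supp_def)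
  also have "\<dots> = CARD('a) ^ (CARD('n) - card J)"
    by (simp add: card_supported Compl_eq_Diff_UNIV card_Diff_subset)
  finally show ?thesis using cardC by (simp add: mult.commute)
qed

lemma K_upper:
  assumes J: "is_ideal P J" and cJ: "CARD('n) - k \<le> card J"
  shows "card {u\<in>C. supp u \<subseteq> J} \<le> CARD('a) ^ (card J - (CARD('n) - k))"
proof -
  obtain J' where J': "J' \<subseteq> J" "is_ideal P J'" "card J' = CARD('n) - k"
    using shrink_ideal[OF po J cJ] by blast
  have K0: "{u\<in>C. supp u \<subseteq> J'} = {0}" using K_small[OF J'(2)] J'(3) dd by simp
  let ?Z = "zo J' :: 'a^'n \<Rightarrow> 'a^'n"
  let ?K = "{u\<in>C. supp u \<subseteq> J}"
  have "inj_on ?Z ?K"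
  proof (rule inj_onI)
    fix u v assume u: "u \<in> ?K" and v: "v \<in> ?K" and e: "?Z u = ?Z v"
    have "u - v \<in> C" using diff_in u v by blast
    moreover have "supp (u - v) \<subseteq> J'"
    proof
      fix i assume i: "i \<in> supp (u - v)"
      show "i \<in> J'"
      proof (rule ccontr)
        assume "i \<notin> J'"
        have "?Z u $ i = ?Z v $ i" using e by simp
        hence "u $ i = v $ i" using \<open>i \<notin> J'\<close> by (simp add: zo_def)
        thus False using i by (simp add: supp_def)
      qed
    qed
    ultimately have "u - v \<in> {u\<in>C. supp u \<subseteq> J'}" by simp
    thus "u = v" using K0 by simp
  qed
  moreover have "?Z ` ?K \<subseteq> {v :: 'a ^ 'n. supp v \<subseteq> J - J'}"
  proof (rule image_subsetI)
    fix u assume u: "u \<in> ?K"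
    show "?Z u \<in> {v :: 'a ^ 'n. supp v \<subseteq> J - J'}"
    proof (clarsimp simp: supp_def)
      fix i assume i: "?Z u $ i \<noteq> 0"
      hence "i \<notin> J'" "u $ i \<noteq> 0" by (auto simp: zo_def split: if_splits)
      thus "i \<in> J \<and> i \<notin> J'" using u by (auto simp: supp_def)
    qed
  qed
  ultimately have "card ?K \<le> card {v :: 'a ^ 'n. supp v \<subseteq> J - J'}"
    by (intro card_inj_on_le) auto
  also have "\<dots> = CARD('a) ^ (card J - (CARD('n) - k))"
    using J' by (simp add: card_supported card_Diff_subset)
  finally show ?thesis .
qed

lemma K_card:
  assumes J: "is_ideal P J"
  shows "card {u\<in>C. supp u \<subseteq> J} = CARD('a) ^ (card J - (CARD('n) - k))"
proof (cases "card J < d")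
  case True
  thus ?thesis using K_small[OF J True] dd by simp
next
  case False
  let ?a = "card {u\<in>C. supp u \<subseteq> J}"
  let ?q = "CARD('a)"
  have cJ: "CARD('n) - k \<le> card J" using False dd by simp
  have up: "?a \<le> ?q ^ (card J - (CARD('n) - k))" using K_upper[OF J cJ] .
  have lo: "?q ^ k \<le> ?a * ?q ^ (CARD('n) - card J)" using K_lower .
  have cJn: "card J \<le> CARD('n)" by (rule card_mono) auto
  have ex: "(card J - (CARD('n) - k)) + (CARD('n) - card J) = k" using cJ cJn kn by simp
  show ?thesis
  proof (rule ccontr)
    assume "?a \<noteq> ?q ^ (card J - (CARD('n) - k))"
    hence lt: "?a < ?q ^ (card J - (CARD('n) - k))" using up by simp
    have "?a * ?q ^ (CARD('n) - card J) < ?q ^ (card J - (CARD('n) - k)) * ?q ^ (CARD('n) - card J)"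
      using lt q2[where 'a='a] by simp
    also have "\<dots> = ?q ^ k" using ex by (simp add: power_add[symmetric])
    finally show False using lo by simp
  qed
qed


lemma IE:
  assumes "finite T"
  shows "is_ideal P A \<Longrightarrow> T \<subseteq> maximal_elems P A \<Longrightarrow>
    int (card {u\<in>C. supp u \<subseteq> A \<and> T \<subseteq> supp u}) = GG (int CARD('a)) (card T) (card A - (CARD('n) - k))"
  using assms
proof (induction T arbitrary: A rule: finite_induct)
  case empty
  then show ?case using K_card[OF empty.prems(1)] by (simp add: GG_0)
next
  case (insert m T)
  have mA: "m \<in> maximal_elems P A" using insert.prems(2) by simp
  have mA': "m \<in> A" using mA by (simp add: maximal_elems_def)
  have idA': "is_ideal P (A - {m})" using remove_max_ideal[OF po insert.prems(1) mA] .
  have TA': "T \<subseteq> maximal_elems P (A - {m})"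
    using max_remove[of T P A m] insert.prems(2) insert.hyps(2) by simp
  let ?S1 = "{u\<in>C. supp u \<subseteq> A \<and> T \<subseteq> supp u}"
  let ?S2 = "{u\<in>C. supp u \<subseteq> A - {m} \<and> T \<subseteq> supp u}"
  have eq: "{u\<in>C. supp u \<subseteq> A \<and> insert m T \<subseteq> supp u} = ?S1 - ?S2" by auto
  have c: "card (?S1 - ?S2) = card ?S1 - card ?S2" by (rule card_Diff_subset) auto
  have le: "card ?S2 \<le> card ?S1" by (rule card_mono) auto
  have IH1: "int (card ?S1) = GG (int CARD('a)) (card T) (card A - (CARD('n) - k))"
    using insert.IH[OF insert.prems(1)] insert.prems(2) by simp
  have IH2: "int (card ?S2) = GG (int CARD('a)) (card T) (card (A - {m}) - (CARD('n) - k))"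
    using insert.IH[OF idA' TA'] .
  have ce: "card (A - {m}) - (CARD('n) - k) = (card A - (CARD('n) - k)) - 1" using mA' by simp
  have ct: "card (insert m T) = Suc (card T)" using insert.hyps by simp
  show ?case unfolding eq ct GG_Suc
    using c le IH1 IH2 ce by (simp add: of_nat_diff)
qed

lemma main:
  assumes "d \<le> r" and "r \<le> CARD('n)"
  shows "int (weight_count r P C) =
    (\<Sum>I\<in>ideals_of_size P r. \<Sum>s=0..r-d.
       (-1)^s * int (card (maximal_elems P I) choose s) * (int (CARD('a)) ^ (r - d + 1 - s) - 1))"
proof -
  have part: "{u\<in>C. pweight P u = r} = (\<Union>I\<in>ideals_of_size P r. {u\<in>C. ideal_hull P (supp u) = I})"
    unfolding ideals_of_size_def pweight_def using hull_ideal[OF po] by auto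
  have cnt: "card {u\<in>C. pweight P u = r} = (\<Sum>I\<in>ideals_of_size P r. card {u\<in>C. ideal_hull P (supp u) = I})"
    unfolding part by (rule card_UN_disjoint) auto
  have per: "int (card {u\<in>C. ideal_hull P (supp u) = I}) =
     (\<Sum>s=0..r-d. (-1)^s * int (card (maximal_elems P I) choose s) * (int (CARD('a)) ^ (r - d + 1 - s) - 1))"
    if I: "I \<in> ideals_of_size P r" for I
  proof -
    have idI: "is_ideal P I" and cI: "card I = r" using I by (auto simp: ideals_of_size_def)
    have e: "{u\<in>C. ideal_hull P (supp u) = I} = {u\<in>C. supp u \<subseteq> I \<and> maximal_elems P I \<subseteq> supp u}"
      using hull_char[OF po idI] by auto
    have "I \<noteq> {}" using cI assms dd by auto
    then obtain i where "i \<in> I" by auto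
    then obtain m0 where "m0 \<in> maximal_elems P I" using exists_max_above[OF po] by blast
    hence m1: "1 \<le> card (maximal_elems P I)" by (simp add: Suc_le_eq card_gt_0_iff) blast
    have ex: "card I - (CARD('n) - k) = r - d + 1" using cI assms dd kn by simp
    have "int (card {u\<in>C. ideal_hull P (supp u) = I}) = GG (int CARD('a)) (card (maximal_elems P I)) (r - d + 1)"
      unfolding e using IE[of "maximal_elems P I" I] idI ex by simp
    also have "\<dots> = (\<Sum>s=0..r-d. (-1)^s * int (card (maximal_elems P I) choose s) * (int (CARD('a)) ^ (r - d + 1 - s) - 1))"
      using GG_final[OF m1, of "r - d + 1" "int CARD('a)"] by simp
    finally show ?thesis .
  qed
  show ?thesis unfolding weight_count_def cnt of_nat_sum
    by (rule sum.cong[OF refl]) (rule per)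
qed

end

theorem theorem4:
  fixes P :: "('n::finite \<times> 'n) set"
    and C :: "('a::{finite,field} ^ 'n) set"
    and k d r :: nat
  assumes "partial_order_on UNIV P"
    and "vec.subspace C"
    and "vec.dim C = k"
    and "d = CARD('n) - k + 1"
    and "min_pweight P C = d"
    and "d \<le> r" and "r \<le> CARD('n)"
  shows "int (weight_count r P C) =
    (\<Sum>I\<in>ideals_of_size P r. \<Sum>s=0..r-d.
       (-1)^s * int (card (maximal_elems P I) choose s) * (int (CARD('a)) ^ (r - d + 1 - s) - 1))"
  using main[OF assms] .

end
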